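(* In the setting below, consider any maximal collection of pairwise disjoint $(\ell+1)$-cycles in $X_1\times\dots\times X_\ell\times Y$ (i.e. tuples $(x_1,\dots,x_\ell,y)$ with $x_i\in X_i$, $y\in Y$, $x_1+\dots+x_\ell+y=0$, pairwise differing in every coordinate), and let $t$ be its size. Then $t\geq\frac{r}{2k\theta}N$.
   Context: Let $p$ be a fixed prime, $n\geq1$, $N=p^n$, $[m]=\{1,\dots,m\}$. For sets $X_1,\dots,X_k\subseteq\mathbb{F}_p^n$, a $k$-cycle is a tuple $(x_1,\dots,x_k)\in X_1\times\dots\times X_k$ with $x_1+\dots+x_k=0$; two cycles are disjoint if they differ in every coordinate. Setting: $k\geq4$, $X_1,\dots,X_k\subseteq\mathbb{F}_p^n$, the number of $k$-cycles in $X_1\times\dots\times X_k$ equals $\delta'N^{k-1}$ with $\delta'>0$, and $\theta\geq 1$ is such that for each $i\in[k]$ every point of $X_i$ occurs as $x_i$ in at most $\theta\delta'N^{k-2}$ $k$-cycles. Put $\alpha=(\theta\delta')^{1/(k-2)}$. For $I\subseteq[k]$ with $1\leq|I|\leq k-2$, an $I$-tuple $(x_i)_{i\in I}\in\prod_{i\in I}X_i$ is bad if at least $2\alpha^{k-|I|-1}N^{k-|I|-1}$ $k$-cycles in $X_1\times\dots\times X_k$ have their $I$-coordinates equal to it. Let $2\leq\ell\leq k-2$ and $0<r<1$. Let $M$ be a collection of $k$-cycles with $|M|\geq r\delta'N^{k-1}$ such that (i) every $(x_1,\dots,x_\ell)\in X_1\times\dots\times X_\ell$ extends to at most $2\alpha^{k-\ell-1}N^{k-\ell-1}$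 $k$-cycles in $M$, and (ii) for every $(x_1,\dots,x_k)\in M$ the $\{\ell+1,\dots,k\}$-tuple $(x_{\ell+1},\dots,x_k)$ is not bad. Let $Y$ be the set of $y\in\mathbb{F}_p^n$ such that the equation $x_1+\dots+x_\ell=-y$ has at most $2\alpha^{\ell-1}N^{\ell-1}$ solutions $(x_1,\dots,x_\ell)\in X_1\times\dots\times X_\ell$. *)

theory Defs
  imports Complex_Main "HOL-Computational_Algebra.Primes"
begin

text \<open>The ambient group F_p^n is modelled as a finite abelian group type 'a of
  exponent p (every element x satisfies x + ... + x (p times) = 0) with CARD('a) = p^n;
  such a group is isomorphic to F_p^n.\<close>

definition exponent_divides :: "nat \<Rightarrow> 'a::ab_group_add itself \<Rightarrow> bool" where
  "exponent_divides p _ \<longleftrightarrow> (\<forall>x::'a. (\<Sum>i<p. x) = 0)"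

definition tuples :: "nat \<Rightarrow> (nat \<Rightarrow> 'a::ab_group_add set) \<Rightarrow> (nat \<Rightarrow> 'a) set" where
  "tuples m X = {x. (\<forall>i\<in>{1..m}. x i \<in> X i) \<and> (\<forall>i. i \<notin> {1..m} \<longrightarrow> x i = 0)}"

definition cycles :: "nat \<Rightarrow> (nat \<Rightarrow> 'a::ab_group_add set) \<Rightarrow> (nat \<Rightarrow> 'a) set" where
  "cycles m X = {x \<in> tuples m X. (\<Sum>i=1..m. x i) = 0}"

definition pairwise_disjoint :: "nat \<Rightarrow> (nat \<Rightarrow> 'a) set \<Rightarrow> bool" where
  "pairwise_disjoint m C \<longleftrightarrow> (\<forall>c\<in>C. \<forall>d\<in>C. c \<noteq> d \<longrightarrow> (\<forall>i\<in>{1..m}. c i \<noteq> d i))"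

definition maximal_disjoint_cycles ::
  "nat \<Rightarrow> (nat \<Rightarrow> 'a::ab_group_add set) \<Rightarrow> (nat \<Rightarrow> 'a) set \<Rightarrow> bool" where
  "maximal_disjoint_cycles m X C \<longleftrightarrow>
     C \<subseteq> cycles m X \<and> pairwise_disjoint m C \<and>
     (\<forall>D. C \<subset> D \<and> D \<subseteq> cycles m X \<longrightarrow> \<not> pairwise_disjoint m D)"

definition bad :: "nat \<Rightarrow> (nat \<Rightarrow> 'a::ab_group_add set) \<Rightarrow> real \<Rightarrow> real \<Rightarrow> nat set \<Rightarrow> (nat \<Rightarrow> 'a) \<Rightarrow> bool" where
  "bad k X \<alpha> N I y \<longleftrightarrow> (\<forall>i\<in>I. y i \<in> X i) \<and>
     real (card {c \<in> cycles k X. \<forall>i\<in>I. c i = y i}) \<ge> 2 * \<alpha> ^ (k - card I - 1) * N ^ (k - card I - 1)"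

end

theory Submission
  imports Defs "HOL-Library.FuncSet"
begin

lemma fin_tuples: "finite (tuples m (X::nat \<Rightarrow> 'a::{ab_group_add,finite} set))"
proof -
  have "tuples m X \<subseteq> (\<lambda>g i. if i \<in> {1..m} then g i else 0) ` ({1..m} \<rightarrow>\<^sub>E (UNIV::'a set))"
  proof
    fix x assume x: "x \<in> tuples m X"
    have "x = (\<lambda>i. if i \<in> {1..m} then restrict x {1..m} i else 0)"
      using x by (auto simp: tuples_def fun_eq_iff)
    moreover have "restrict x {1..m} \<in> {1..m} \<rightarrow>\<^sub>E (UNIV::'a set)" by auto
    ultimately show "x \<in> (\<lambda>g i. if i \<in> {1..m} then g i else 0) ` ({1..m} \<rightarrow>\<^sub>E (UNIV::'a set))"
      by (rule image_eqI)
  qed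
  thus ?thesis by (rule finite_subset) (simp add: finite_PiE)
qed

lemma fin_cycles: "finite (cycles m (X::nat \<Rightarrow> 'a::{ab_group_add,finite} set))"
  by (rule finite_subset[OF _ fin_tuples[of m X]]) (auto simp: cycles_def)

lemma sum_split: "(l::nat) \<le> k \<Longrightarrow> sum f {1..k} = sum f {1..l} + sum f {l+1..k}"
proof -
  assume "l \<le> k"
  hence "{1..k} = {1..l} \<union> {l+1..k}" by auto
  thus ?thesis by (simp add: sum.union_disjoint[symmetric] ivl_disj_int)
qed

theorem claim3p4:
  fixes p n k l :: nat and X :: "nat \<Rightarrow> ('a::{ab_group_add,finite}) set"
    and \<theta> r :: real and M C :: "(nat \<Rightarrow> 'a) set"
  assumes "prime p" and "n \<ge> 1" and "card (UNIV :: 'a set) = p ^ n"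
    and "exponent_divides p TYPE('a)"
    and "k \<ge> 4"
    and "real (card (cycles k X)) > 0"
    and "\<theta> \<ge> 1"
    and "\<forall>i\<in>{1..k}. \<forall>a\<in>X i.
           real (card {c \<in> cycles k X. c i = a})
             \<le> \<theta> * (real (card (cycles k X)) / real (p ^ n) ^ (k - 1)) * real (p ^ n) ^ (k - 2)"
    and "2 \<le> l" and "l \<le> k - 2"
    and "0 < r" and "r < 1"
    and "M \<subseteq> cycles k X"
    and "real (card M) \<ge> r * (real (card (cycles k X)) / real (p ^ n) ^ (k - 1)) * real (p ^ n) ^ (k - 1)"
    and "\<forall>y \<in> tuples l X.
           real (card {c \<in> M. \<forall>i\<in>{1..l}. c i = y i})
             \<le> 2 * root (k - 2) (\<theta> * (real (card (cycles k X)) / real (p ^ n) ^ (k - 1))) ^ (k - l - 1)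
                 * real (p ^ n) ^ (k - l - 1)"
    and "\<forall>c\<in>M. \<not> bad k X (root (k - 2) (\<theta> * (real (card (cycles k X)) / real (p ^ n) ^ (k - 1))))
                        (real (p ^ n)) {l+1..k} c"
    and "maximal_disjoint_cycles (l + 1)
           (X(l + 1 := {y. real (card {x \<in> tuples l X. (\<Sum>i=1..l. x i) = - y})
                 \<le> 2 * root (k - 2) (\<theta> * (real (card (cycles k X)) / real (p ^ n) ^ (k - 1))) ^ (l - 1)
                       * real (p ^ n) ^ (l - 1)})) C"
  shows "real (card C) \<ge> r / (2 * real k * \<theta>) * real (p ^ n)"
proof -
  define N where "N = real (p^n)"
  define \<delta> where "\<delta> = real (card (cycles k X)) / N^(k-1)"
  define \<alpha> where "\<alpha> = root (k-2) (\<theta>*\<delta>)"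
  define Y where "Y = {y. real (card {x \<in> tuples l X. (\<Sum>i=1..l. x i) = - y}) \<le> 2 * \<alpha>^(l-1) * N^(l-1)}"
  define XX where "XX = X(l+1 := Y)"
  define B where "B = \<theta>*\<delta>*N^(k-2)"
  have Npos: "N > 0" using prime_gt_0_nat[OF assms(1)] by (simp add: N_def)
  have \<delta>pos: "\<delta> > 0" using assms(6) Npos by (simp add: \<delta>_def)
  have \<alpha>nn: "\<alpha> \<ge> 0" unfolding \<alpha>_def by (rule real_root_ge_zero) (use \<delta>pos assms(7) in simp)
  have \<alpha>pow: "\<alpha>^(k-2) = \<theta>*\<delta>" unfolding \<alpha>_def
    by (rule real_root_pow_pos2) (use assms(5,7) \<delta>pos in auto)
  have Bnn: "B \<ge> 0" using \<delta>pos assms(7) Npos by (simp add: B_def)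
  have A8: "\<forall>i\<in>{1..k}. \<forall>a\<in>X i. real (card {c \<in> cycles k X. c i = a}) \<le> B"
    using assms(8) unfolding B_def \<delta>_def N_def by blast
  have MC: "real (card M) \<ge> r*\<delta>*N^(k-1)"
    using assms(14) unfolding \<delta>_def N_def by blast
  have A15: "\<forall>y \<in> tuples l X. real (card {c \<in> M. \<forall>i\<in>{1..l}. c i = y i}) \<le> 2 * \<alpha>^(k-l-1) * N^(k-l-1)"
    using assms(15) unfolding \<alpha>_def \<delta>_def N_def by blast
  have A16: "\<forall>c\<in>M. \<not> bad k X \<alpha> N {l+1..k} c"
    using assms(16) unfolding \<alpha>_def \<delta>_def N_def by blast
  have maxC: "maximal_disjoint_cycles (l+1) XX C"
    using assms(17) unfolding XX_def Y_def \<alpha>_def \<delta>_def N_def by blast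
  have lk: "l \<le> k" using assms(5,10) by simp
  have finM: "finite M" using assms(13) fin_cycles finite_subset by blast
  have CC: "C \<subseteq> cycles (l+1) XX" using maxC by (simp add: maximal_disjoint_cycles_def)
  have finC: "finite C" using CC fin_cycles finite_subset by blast
  define \<phi> where "\<phi> = (\<lambda>c::nat\<Rightarrow>'a. \<lambda>i. if i \<in> {1..l} then c i else if i = l+1 then (\<Sum>j=l+1..k. c j) else 0)"
  have cinfo: "(\<forall>i\<in>{1..k}. c i \<in> X i) \<and> (\<Sum>i=1..l. c i) = - (\<Sum>i=l+1..k. c i)" if "c \<in> M" for c
  proof -
    have cc: "c \<in> cycles k X" using assms(13) that by blast
    hence ct: "\<forall>i\<in>{1..k}. c i \<in> X i" and cs: "(\<Sum>i=1..k. c i) = 0" by (auto simp: cycles_def tuples_def)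
    from cs sum_split[OF lk, of c] have "(\<Sum>i=1..l. c i) = - (\<Sum>i=l+1..k. c i)"
      by (simp add: eq_neg_iff_add_eq_0)
    with ct show ?thesis by blast
  qed
  have \<phi>cyc: "\<phi> c \<in> cycles (l+1) XX" if cM: "c \<in> M" for c
  proof -
    have cc: "c \<in> cycles k X" using assms(13) cM by blast
    have ct: "\<forall>i\<in>{1..k}. c i \<in> X i" and cs: "(\<Sum>i=1..l. c i) = - (\<Sum>i=l+1..k. c i)"
      using cinfo[OF cM] by auto
    let ?y = "\<Sum>i=l+1..k. c i"
    let ?T = "{x \<in> tuples l X. (\<Sum>i=1..l. x i) = - ?y}"
    let ?S = "{d \<in> cycles k X. \<forall>i\<in>{l+1..k}. d i = c i}"
    define ext where "ext = (\<lambda>x::nat\<Rightarrow>'a. \<lambda>i. if i \<in> {1..l} then x i else if i \<in> {l+1..k} then c i else 0)"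
    have inj: "inj_on ext ?T"
    proof (rule inj_onI)
      fix x x' assume x: "x \<in> ?T" and x': "x' \<in> ?T" and e: "ext x = ext x'"
      show "x = x'"
      proof
        fix i
        have "ext x i = ext x' i" using e by simp
        thus "x i = x' i" using x x' by (cases "i \<in> {1..l}") (auto simp: ext_def tuples_def)
      qed
    qed
    have sub: "ext ` ?T \<subseteq> ?S"
    proof
      fix z assume "z \<in> ext ` ?T"
      then obtain x where x: "x \<in> ?T" and z: "z = ext x" by blast
      have tup: "z \<in> tuples k X"
      proof -
        have xt: "\<forall>i\<in>{1..l}. x i \<in> X i" using x by (simp add: tuples_def)
        have a: "\<forall>i\<in>{1..k}. z i \<in> X i"
        proof
          fix i assume i: "i \<in> {1..k}"
          show "z i \<in> X i"
          proof (cases "i \<in> {1..l}")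
            case True thus ?thesis using xt by (simp add: z ext_def)
          next
            case False
            hence "i \<in> {l+1..k}" using i by auto
            thus ?thesis using ct i False by (simp add: z ext_def)
          qed
        qed
        have b: "\<forall>i. i \<notin> {1..k} \<longrightarrow> z i = 0"
        proof (intro allI impI)
          fix i assume i: "i \<notin> {1..k}"
          hence "i \<notin> {1..l}" "i \<notin> {l+1..k}" using lk by auto
          thus "z i = 0" unfolding z ext_def by auto
        qed
        show ?thesis using a b by (simp add: tuples_def)
      qed
      have "(\<Sum>i=1..k. z i) = (\<Sum>i=1..l. z i) + (\<Sum>i=l+1..k. z i)" by (rule sum_split[OF lk])
      also have "(\<Sum>i=1..l. z i) = (\<Sum>i=1..l. x i)" by (rule sum.cong) (auto simp: z ext_def)
      also have "(\<Sum>i=l+1..k. z i) = ?y" by (rule sum.cong) (auto simp: z ext_def)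
      finally have "(\<Sum>i=1..k. z i) = 0" using x by simp
      moreover have "\<forall>i\<in>{l+1..k}. z i = c i" by (auto simp: z ext_def)
      ultimately show "z \<in> ?S" using tup by (simp add: cycles_def)
    qed
    have "card ?T \<le> card ?S"
      by (rule card_inj_on_le[OF inj sub], rule finite_subset[OF _ fin_cycles[of k X]]) auto
    moreover have "real (card ?S) < 2 * \<alpha>^(l-1) * N^(l-1)"
    proof -
      have nb: "\<not> bad k X \<alpha> N {l+1..k} c" using A16 cM by blast
      have "\<forall>i\<in>{l+1..k}. c i \<in> X i" using ct by auto
      moreover have "k - card {l+1..k} - 1 = l - 1" using lk by simp
      ultimately show ?thesis using nb unfolding bad_def by auto
    qed
    ultimately have yY: "?y \<in> Y" unfolding Y_def by simp
    have "\<phi> c \<in> tuples (l+1) XX"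
      unfolding tuples_def XX_def \<phi>_def using ct yY lk by auto
    moreover have "(\<Sum>i=1..l+1. \<phi> c i) = 0"
    proof -
      have "(\<Sum>i=1..l+1. \<phi> c i) = (\<Sum>i=1..l. \<phi> c i) + \<phi> c (l+1)" by simp
      also have "(\<Sum>i=1..l. \<phi> c i) = (\<Sum>i=1..l. c i)" by (rule sum.cong) (auto simp: \<phi>_def)
      finally show ?thesis using cs by (simp add: \<phi>_def)
    qed
    ultimately show ?thesis by (simp add: cycles_def)
  qed
  have hit: "\<forall>c\<in>M. \<exists>d\<in>C. \<exists>i\<in>{1..l+1}. d i = \<phi> c i"
  proof (rule ballI, rule ccontr)
    fix c assume cM: "c\<in>M" and no: "\<not> (\<exists>d\<in>C. \<exists>i\<in>{1..l+1}. d i = \<phi> c i)"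
    have notin: "\<phi> c \<notin> C" using no by force
    have "C \<subset> insert (\<phi> c) C" using notin by auto
    moreover have "insert (\<phi> c) C \<subseteq> cycles (l+1) XX" using CC \<phi>cyc cM by auto
    moreover have "pairwise_disjoint (l+1) (insert (\<phi> c) C)"
    proof -
      have pd: "pairwise_disjoint (l+1) C" using maxC by (simp add: maximal_disjoint_cycles_def)
      show ?thesis unfolding pairwise_disjoint_def
      proof (intro ballI impI)
        fix a b i assume a: "a \<in> insert (\<phi> c) C" and b: "b \<in> insert (\<phi> c) C" and ab: "a \<noteq> b" and i: "i \<in> {1..l+1}"
        show "a i \<noteq> b i"
        proof (cases "a = \<phi> c")
          case True
          hence "b \<in> C" using b ab by auto
          hence "b i \<noteq> \<phi> c i" using no i by blast
          thus ?thesis using True by simp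
        next
          case False
          hence aC: "a \<in> C" using a by auto
          show ?thesis
          proof (cases "b = \<phi> c")
            case True
            have "a i \<noteq> \<phi> c i" using no aC i by blast
            thus ?thesis using True by simp
          next
            case False
            hence "b \<in> C" using b by auto
            thus ?thesis using pd aC ab i unfolding pairwise_disjoint_def by blast
          qed
        qed
      qed
    qed
    ultimately show False using maxC unfolding maximal_disjoint_cycles_def by blast
  qed
  define S where "S = (\<lambda>d i. {c \<in> M. \<phi> c i = d i})"
  have finS: "finite (S d i)" for d i using finM by (simp add: S_def)
  have "M \<subseteq> (\<Union>d\<in>C. \<Union>i\<in>{1..l+1}. S d i)" 
  proof
    fix c assume cM: "c \<in> M"
    then obtain d i where d: "d \<in> C" "i \<in> {1..l+1}" "d i = \<phi> c i" using hit by blast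
    hence "c \<in> S d i" using cM by (simp add: S_def)
    thus "c \<in> (\<Union>d\<in>C. \<Union>i\<in>{1..l+1}. S d i)" using d by blast
  qed
  hence "card M \<le> card (\<Union>d\<in>C. \<Union>i\<in>{1..l+1}. S d i)"
    by (rule card_mono[rotated]) (use finC finS in auto)
  also have "\<dots> \<le> (\<Sum>d\<in>C. card (\<Union>i\<in>{1..l+1}. S d i))" by (rule card_UN_le[OF finC])
  also have "\<dots> \<le> (\<Sum>d\<in>C. \<Sum>i\<in>{1..l+1}. card (S d i))"
    by (rule sum_mono) (rule card_UN_le, simp)
  finally have "real (card M) \<le> real (\<Sum>d\<in>C. \<Sum>i\<in>{1..l+1}. card (S d i))"
    by (simp only: of_nat_le_iff)
  hence cM1: "real (card M) \<le> (\<Sum>d\<in>C. \<Sum>i\<in>{1..l+1}. real (card (S d i)))"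
    by (simp only: of_nat_sum)
  have small: "real (card (S d i)) \<le> B" if dC: "d \<in> C" and i: "i \<in> {1..l}" for d i
  proof -
    have "d \<in> cycles (l+1) XX" using CC dC by blast
    hence "d i \<in> XX i" using i by (simp add: cycles_def tuples_def)
    hence "d i \<in> X i" using i by (simp add: XX_def)
    moreover have "S d i \<subseteq> {c \<in> cycles k X. c i = d i}"
      using i assms(13) by (auto simp: S_def \<phi>_def)
    hence "card (S d i) \<le> card {c \<in> cycles k X. c i = d i}"
      by (rule card_mono[rotated]) (rule finite_subset[OF _ fin_cycles[of k X]], auto)
    moreover have "i \<in> {1..k}" using i lk by auto
    ultimately have "real (card (S d i)) \<le> real (card {c \<in> cycles k X. c i = d i})"
      "real (card {c \<in> cycles k X. c i = d i}) \<le> B" using A8 by auto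
    thus ?thesis by linarith
  qed
  have big: "real (card (S d (l+1))) \<le> 4*B" if dC: "d \<in> C" for d
  proof -
    let ?y = "d (l+1)"
    have "d \<in> cycles (l+1) XX" using CC dC by blast
    hence "?y \<in> XX (l+1)" by (simp add: cycles_def tuples_def)
    hence yY: "?y \<in> Y" by (simp add: XX_def)
    let ?T = "{x \<in> tuples l X. (\<Sum>i=1..l. x i) = - ?y}"
    have finT: "finite ?T" using fin_tuples[of l X] by simp
    have Tb: "real (card ?T) \<le> 2 * \<alpha>^(l-1) * N^(l-1)" using yY by (simp add: Y_def)
    have "S d (l+1) \<subseteq> (\<Union>x\<in>?T. {c \<in> M. \<forall>i\<in>{1..l}. c i = x i})"
    proof
      fix c assume c: "c \<in> S d (l+1)"
      hence cM: "c \<in> M" and cy: "(\<Sum>j=l+1..k. c j) = ?y" by (auto simp: S_def \<phi>_def)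
      define x where "x = (\<lambda>i. if i \<in> {1..l} then c i else 0)"
      have "x \<in> tuples l X" using cinfo[OF cM] lk by (auto simp: x_def tuples_def)
      moreover have "(\<Sum>i=1..l. x i) = (\<Sum>i=1..l. c i)" by (rule sum.cong) (auto simp: x_def)
      ultimately have "x \<in> ?T" using cinfo[OF cM] cy by simp
      moreover have "c \<in> {c \<in> M. \<forall>i\<in>{1..l}. c i = x i}" using cM by (simp add: x_def)
      ultimately show "c \<in> (\<Union>x\<in>?T. {c \<in> M. \<forall>i\<in>{1..l}. c i = x i})" by blast
    qed
    hence "card (S d (l+1)) \<le> card (\<Union>x\<in>?T. {c \<in> M. \<forall>i\<in>{1..l}. c i = x i})"
      by (rule card_mono[rotated]) (use finT finM in auto)
    also have "\<dots> \<le> (\<Sum>x\<in>?T. card {c \<in> M. \<forall>i\<in>{1..l}. c i = x i})" by (rule card_UN_le[OF finT])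
    finally have "real (card (S d (l+1))) \<le> real (\<Sum>x\<in>?T. card {c \<in> M. \<forall>i\<in>{1..l}. c i = x i})"
      by (simp only: of_nat_le_iff)
    also have "\<dots> = (\<Sum>x\<in>?T. real (card {c \<in> M. \<forall>i\<in>{1..l}. c i = x i}))"
      by (simp only: of_nat_sum)
    also have "\<dots> \<le> (\<Sum>x\<in>?T. 2 * \<alpha>^(k-l-1) * N^(k-l-1))"
      by (rule sum_mono) (use A15 in auto)
    also have "\<dots> = real (card ?T) * (2 * \<alpha>^(k-l-1) * N^(k-l-1))" by simp
    also have "\<dots> \<le> (2 * \<alpha>^(l-1) * N^(l-1)) * (2 * \<alpha>^(k-l-1) * N^(k-l-1))"
      by (rule mult_right_mono[OF Tb]) (use \<alpha>nn Npos in auto)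
    also have "\<dots> = 4 * (\<alpha>^(l-1) * \<alpha>^(k-l-1)) * (N^(l-1) * N^(k-l-1))" by (simp add: algebra_simps)
    also have "\<dots> = 4 * \<alpha>^(k-2) * N^(k-2)"
    proof -
      have e: "l - 1 + (k - l - 1) = k - 2" using assms(9,10) by simp
      show ?thesis by (simp only: power_add[symmetric] e)
    qed
    also have "\<dots> = 4 * B" by (simp add: \<alpha>pow B_def)
    finally show ?thesis .
  qed
  have perd: "(\<Sum>i\<in>{1..l+1}. real (card (S d i))) \<le> 2 * real k * B" if dC: "d \<in> C" for d
  proof -
    have "(\<Sum>i\<in>{1..l+1}. real (card (S d i))) = (\<Sum>i\<in>{1..l}. real (card (S d i))) + real (card (S d (l+1)))"
      by simp
    also have "\<dots> \<le> (\<Sum>i\<in>{1..l}. B) + 4*B"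
      by (rule add_mono, rule sum_mono) (use small[OF dC] big[OF dC] in auto)
    also have "\<dots> = (real l + 4) * B" by (simp add: algebra_simps)
    also have "\<dots> \<le> 2 * real k * B"
      by (rule mult_right_mono) (use assms(5,10) Bnn in auto)
    finally show ?thesis .
  qed
  have "r*\<delta>*N^(k-1) \<le> (\<Sum>d\<in>C. 2 * real k * B)"
  proof -
    have "(\<Sum>d\<in>C. \<Sum>i\<in>{1..l+1}. real (card (S d i))) \<le> (\<Sum>d\<in>C. 2 * real k * B)"
      by (rule sum_mono) (rule perd)
    thus ?thesis using MC cM1 by linarith
  qed
  also have "\<dots> = real (card C) * (2 * real k * \<theta>) * (\<delta> * N^(k-2))" by (simp add: B_def algebra_simps)
  finally have h: "r*\<delta>*N^(k-1) \<le> real (card C) * (2 * real k * \<theta>) * (\<delta> * N^(k-2))" .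
  have kk: "k - 1 = Suc (k - 2)" using assms(5) by simp
  have ineq: "(r * N) * (\<delta> * N^(k-2)) \<le> (real (card C) * (2 * real k * \<theta>)) * (\<delta> * N^(k-2))"
    using h unfolding kk power_Suc by (simp only: mult.assoc mult.left_commute)
  have pos: "\<delta> * N^(k-2) > 0" using \<delta>pos Npos by simp
  have "r * N \<le> real (card C) * (2 * real k * \<theta>)" using ineq pos mult_le_cancel_right_pos by blast
  moreover have "2 * real k * \<theta> > 0" using assms(5,7) by simp
  ultimately have "r * N / (2 * real k * \<theta>) \<le> real (card C)" by (simp add: pos_divide_le_eq)
  thus ?thesis by (simp add: N_def)
qed

end
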